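(* Let $F_\infty$ be the free group on countably many generators $a_1,a_2,\dots$, and let $T$ be its Cayley graph with respect to $\{a_i\}$ (vertices: reduced words; $t$ adjacent to $ta_i^{\pm1}$), a tree rooted at the empty word $\emptyset$. For $t\ne\emptyset$ let $\hat t$ be the word obtained by deleting the last letter of $t$. Let $G=\mathrm{Aut}(T)$ be the group of graph automorphisms of $T$, acting on $\mathbb C^T$ (and on $\ell_1(T),\ell_2(T)$) by $u(g)x=(x(g^{-1}t))_{t\in T}$. Define $R:\ell_2(T)\to\ell_\infty(T)$ by $(Rx)(s)=x(\hat s)$ for $s\neq\emptyset$, $(Rx)(\emptyset)=0$, and $L:\ell_1(T)\to\ell_1(T)$ by $Le_t=e_{\hat t}$ for $t\ne\emptyset$, $Le_\emptyset=0$. Then: (1) there is no linear map $\Lambda:\ell_2(T)\to\mathbb C^T$ with $u(g)\Lambda=\Lambda u(g)$ for all $g\in G$ such that $R-\Lambda$ maps $\ell_2(T)$ boundedly into $\ell_2(T)$; (2) there is no linear map $\Lambda:\ell_1(T)\to\mathbb C^T$ with $u(g)\Lambda=\Lambda u(g)$ for all $g\in G$ such that $(L-\Lambda)x\in\ell_2(T)$ and $\|(L-\Lambda)x\|_2\le C\|x\|_2$ for all $x\in\ell_1(T)$.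
   Context: $e_t$ denotes the canonical basis vector at $t\in T$. (It is known that the commutators $u(g)R-Ru(g)$ and $u(g)L-Lu(g)$ extend to bounded operators on $\ell_2(T)$ of norm at most $2$, so $R$ and $L$ are linear $\mathrm{Aut}(T)$-centralizers $\ell_2(T)\curvearrowright\ell_2(T)$.) *)

theory Defs
  imports "HOL-Analysis.Analysis"
begin

text \<open>Letters: (i, True) = a_i, (i, False) = a_i^{-1}. Words are lists of letters.\<close>
type_synonym word = "(nat \<times> bool) list"

definition reduced :: "word \<Rightarrow> bool" where
  "reduced w \<longleftrightarrow> (\<forall>k. Suc k < length w \<longrightarrow>
      \<not> (fst (w ! k) = fst (w ! Suc k) \<and> snd (w ! k) \<noteq> snd (w ! Suc k)))"

definition TT :: "word set" where
  "TT = {w. reduced w}"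

text \<open>Adjacency in the Cayley graph: t ~ t a_i^{+-1} (on reduced words this means one
  word is the other extended by one letter).\<close>
definition adj :: "word \<Rightarrow> word \<Rightarrow> bool" where
  "adj s t \<longleftrightarrow> (\<exists>l. t = s @ [l]) \<or> (\<exists>l. s = t @ [l])"

text \<open>Graph automorphisms of T (only the values on TT matter).\<close>
definition tree_aut :: "(word \<Rightarrow> word) \<Rightarrow> bool" where
  "tree_aut g \<longleftrightarrow> bij_betw g TT TT \<and> (\<forall>s\<in>TT. \<forall>t\<in>TT. adj s t \<longleftrightarrow> adj (g s) (g t))"

text \<open>Elements of C^T are represented by functions vanishing outside TT.\<close>
definition vecT :: "(word \<Rightarrow> complex) \<Rightarrow> bool" where
  "vecT x \<longleftrightarrow> (\<forall>t. t \<notin> TT \<longrightarrow> x t = 0)"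

definition ell1 :: "(word \<Rightarrow> complex) set" where
  "ell1 = {x. vecT x \<and> (\<lambda>t. norm (x t)) summable_on TT}"

definition ell2 :: "(word \<Rightarrow> complex) set" where
  "ell2 = {x. vecT x \<and> (\<lambda>t. (norm (x t))\<^sup>2) summable_on TT}"

definition norm2 :: "(word \<Rightarrow> complex) \<Rightarrow> real" where
  "norm2 x = sqrt (\<Sum>\<^sub>\<infinity>t\<in>TT. (norm (x t))\<^sup>2)"

definition uact :: "(word \<Rightarrow> word) \<Rightarrow> (word \<Rightarrow> complex) \<Rightarrow> (word \<Rightarrow> complex)" where
  "uact g x = (\<lambda>t. if t \<in> TT then x (inv_into TT g t) else 0)"

definition Rop :: "(word \<Rightarrow> complex) \<Rightarrow> (word \<Rightarrow> complex)" where
  "Rop x = (\<lambda>s. if s \<in> TT \<and> s \<noteq> [] then x (butlast s) else 0)"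

text \<open>L e_t = e_{hat t}, extended to ell1: (Lx)(s) = sum of x(t) over t with hat t = s.\<close>
definition Lop :: "(word \<Rightarrow> complex) \<Rightarrow> (word \<Rightarrow> complex)" where
  "Lop x = (\<lambda>s. if s \<in> TT then (\<Sum>\<^sub>\<infinity>t\<in>{t\<in>TT. t \<noteq> [] \<and> butlast t = s}. x t) else 0)"

definition lin_on :: "(word \<Rightarrow> complex) set \<Rightarrow> ((word \<Rightarrow> complex) \<Rightarrow> (word \<Rightarrow> complex)) \<Rightarrow> bool" where
  "lin_on D \<Lambda> \<longleftrightarrow> (\<forall>x\<in>D. \<forall>y\<in>D. \<forall>c a::complex. \<forall>t\<in>TT.
      \<Lambda> (\<lambda>s. c * x s + a * y s) t = c * \<Lambda> x t + a * \<Lambda> y t)"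

definition equivariant_on :: "(word \<Rightarrow> complex) set \<Rightarrow> ((word \<Rightarrow> complex) \<Rightarrow> (word \<Rightarrow> complex)) \<Rightarrow> bool" where
  "equivariant_on D \<Lambda> \<longleftrightarrow> (\<forall>g. tree_aut g \<longrightarrow> (\<forall>x\<in>D. \<forall>t\<in>TT.
      uact g (\<Lambda> x) t = \<Lambda> (uact g x) t))"

definition restrT :: "(word \<Rightarrow> complex) \<Rightarrow> (word \<Rightarrow> complex)" where
  "restrT y = (\<lambda>t. if t \<in> TT then y t else 0)"

end

theory Submission
  imports Defs
begin

definition inv_l :: "nat \<times> bool \<Rightarrow> nat \<times> bool" where
  "inv_l x = (fst x, \<not> snd x)"

lemma inv_l_inv[simp]: "inv_l (inv_l x) = x"
  by (simp add: inv_l_def)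

lemma cancel_iff: "(fst a = fst b \<and> snd a \<noteq> snd b) \<longleftrightarrow> b = inv_l a"
  by (cases a; cases b) (auto simp: inv_l_def)

lemma reduced_alt: "reduced w \<longleftrightarrow> (\<forall>k. Suc k < length w \<longrightarrow> w ! Suc k \<noteq> inv_l (w ! k))"
  unfolding reduced_def by (simp only: cancel_iff)

lemma reduced_Nil[simp]: "reduced []" by (simp add: reduced_def)
lemma reduced_single[simp]: "reduced [x]" by (simp add: reduced_def)

lemma reduced_Cons2: "reduced (x#y#w) \<longleftrightarrow> y \<noteq> inv_l x \<and> reduced (y#w)"
proof
  assume r: "reduced (x#y#w)"
  have "Suc 0 < length (x#y#w)" by simp
  then have "(x#y#w) ! Suc 0 \<noteq> inv_l ((x#y#w) ! 0)" using r unfolding reduced_alt by blast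
  then have "y \<noteq> inv_l x" by simp
  moreover have "reduced (y#w)" unfolding reduced_alt
  proof (intro allI impI)
    fix k assume "Suc k < length (y#w)"
    then have "Suc (Suc k) < length (x#y#w)" by simp
    then have "(x#y#w) ! Suc (Suc k) \<noteq> inv_l ((x#y#w) ! Suc k)" using r unfolding reduced_alt by blast
    then show "(y#w) ! Suc k \<noteq> inv_l ((y#w) ! k)" by simp
  qed
  ultimately show "y \<noteq> inv_l x \<and> reduced (y#w)" by simp
next
  assume a: "y \<noteq> inv_l x \<and> reduced (y#w)"
  show "reduced (x#y#w)" unfolding reduced_alt
  proof (intro allI impI)
    fix k assume k: "Suc k < length (x#y#w)"
    show "(x#y#w) ! Suc k \<noteq> inv_l ((x#y#w) ! k)"
    proof (cases k)
      case 0 then show ?thesis using a by simp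
    next
      case (Suc j)
      then have "Suc j < length (y#w)" using k by simp
      then show ?thesis using a Suc unfolding reduced_alt by simp
    qed
  qed
qed

lemma reduced_Cons_tail: "reduced (x#w) \<Longrightarrow> reduced w"
  by (cases w) (auto simp: reduced_Cons2)

definition ind :: "word set \<Rightarrow> word \<Rightarrow> complex" where
  "ind A = (\<lambda>s. if s \<in> A then 1 else 0)"

lemma ind_in:
  assumes "finite A" "A \<subseteq> TT"
  shows "ind A \<in> ell1" "ind A \<in> ell2"
proof -
  have v: "vecT (ind A)" using assms unfolding vecT_def ind_def by auto
  have "(\<lambda>t. norm (ind A t)) summable_on TT \<longleftrightarrow> (\<lambda>t. norm (ind A t)) summable_on A"
    by (rule summable_on_cong_neutral) (use assms in \<open>auto simp: ind_def\<close>)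
  then show "ind A \<in> ell1" using v assms unfolding ell1_def by simp
  have "(\<lambda>t. (norm (ind A t))\<^sup>2) summable_on TT \<longleftrightarrow> (\<lambda>t. (norm (ind A t))\<^sup>2) summable_on A"
    by (rule summable_on_cong_neutral) (use assms in \<open>auto simp: ind_def\<close>)
  then show "ind A \<in> ell2" using v assms unfolding ell2_def by simp
qed

lemma norm2_ind:
  assumes "finite A" "A \<subseteq> TT"
  shows "norm2 (ind A) = sqrt (real (card A))"
proof -
  have "(\<Sum>\<^sub>\<infinity>t\<in>TT. (norm (ind A t))\<^sup>2) = (\<Sum>\<^sub>\<infinity>t\<in>A. (norm (ind A t))\<^sup>2)"
    by (rule infsum_cong_neutral) (use assms in \<open>auto simp: ind_def\<close>)
  also have "\<dots> = (\<Sum>t\<in>A. 1)" using assms by (simp add: ind_def)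
  finally show ?thesis unfolding norm2_def by simp
qed

lemma norm2_nonneg: "norm2 x \<ge> 0" unfolding norm2_def
  by (simp add: infsum_nonneg)

lemma sum_le_norm2:
  assumes "y \<in> ell2" "finite F" "F \<subseteq> TT"
  shows "(\<Sum>t\<in>F. (norm (y t))\<^sup>2) \<le> (norm2 y)\<^sup>2"
proof -
  have s: "(\<lambda>t. (norm (y t))\<^sup>2) summable_on TT" using assms unfolding ell2_def by simp
  have "(\<Sum>\<^sub>\<infinity>t\<in>F. (norm (y t))\<^sup>2) \<le> (\<Sum>\<^sub>\<infinity>t\<in>TT. (norm (y t))\<^sup>2)"
    by (rule infsum_mono_neutral) (use s assms in auto)
  moreover have "(\<Sum>\<^sub>\<infinity>t\<in>TT. (norm (y t))\<^sup>2) \<ge> 0" by (simp add: infsum_nonneg)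
  ultimately show ?thesis using assms unfolding norm2_def by simp
qed


fun lm :: "nat \<times> bool \<Rightarrow> word \<Rightarrow> word" where
  "lm x [] = [x]"
| "lm x (y#t) = (if y = inv_l x then t else x#y#t)"

lemma lm_TT: "t \<in> TT \<Longrightarrow> lm x t \<in> TT"
  unfolding TT_def by (cases t) (auto simp: reduced_Cons2 dest: reduced_Cons_tail)

lemma lm_inv: "t \<in> TT \<Longrightarrow> lm (inv_l x) (lm x t) = t"
proof (cases t)
  case Nil then show ?thesis by simp
next
  case (Cons y t')
  assume "t \<in> TT"
  then have r: "reduced (y#t')" using Cons by (simp add: TT_def)
  show ?thesis
  proof (cases "y = inv_l x")
    case True
    then show ?thesis using Cons r by (cases t') (auto simp: reduced_Cons2)
  next
    case False
    then show ?thesis using Cons by simp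
  qed
qed

lemma lm_snoc: "lm x (s @ [z]) = lm x s @ [z] \<or> lm x s = lm x (s @ [z]) @ [x]"
  by (cases s) auto

lemma lm_adj: "adj s t \<Longrightarrow> adj (lm x s) (lm x t)"
  unfolding adj_def using lm_snoc by metis

lemma aut_lemma:
  assumes "\<forall>t\<in>TT. g t \<in> TT" "\<forall>t\<in>TT. h t \<in> TT" "\<forall>t\<in>TT. h (g t) = t" "\<forall>t\<in>TT. g (h t) = t"
    "\<forall>s t. adj s t \<longrightarrow> adj (g s) (g t)" "\<forall>s t. adj s t \<longrightarrow> adj (h s) (h t)"
  shows "tree_aut g" "\<forall>t\<in>TT. inv_into TT g t = h t"
proof -
  have b: "bij_betw g TT TT" by (rule bij_betw_byWitness[of _ h]) (use assms in auto)
  then show "tree_aut g" unfolding tree_aut_def using assms by metis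
  show "\<forall>t\<in>TT. inv_into TT g t = h t"
    using assms b by (metis bij_betw_def inv_into_f_f)
qed

lemma lm_aut: "tree_aut (lm x)" "\<forall>t\<in>TT. inv_into TT (lm x) t = lm (inv_l x) t"
proof -
  have h1: "\<forall>t\<in>TT. lm (inv_l x) (lm x t) = t" using lm_inv[of _ x] by blast
  have h2: "\<forall>t\<in>TT. lm x (lm (inv_l x) t) = t" using lm_inv[of _ "inv_l x"] by simp
  have a1: "\<forall>t\<in>TT. lm x t \<in> TT" "\<forall>t\<in>TT. lm (inv_l x) t \<in> TT" using lm_TT by blast+
  have a2: "\<forall>s t. adj s t \<longrightarrow> adj (lm x s) (lm x t)" "\<forall>s t. adj s t \<longrightarrow> adj (lm (inv_l x) s) (lm (inv_l x) t)"
    using lm_adj by blast+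
  show "tree_aut (lm x)" by (rule aut_lemma(1)[OF a1 h1 h2 a2])
  show "\<forall>t\<in>TT. inv_into TT (lm x) t = lm (inv_l x) t" by (rule aut_lemma(2)[OF a1 h1 h2 a2])
qed

definition sg :: "nat \<times> bool \<Rightarrow> nat \<times> bool \<Rightarrow> nat \<times> bool \<Rightarrow> nat \<times> bool" where
  "sg a b z = (if fst z = fst a then (fst b, (snd z = snd a) = snd b)
     else if fst z = fst b then (fst a, (snd z = snd b) = snd a) else z)"

lemma sg_invol: "sg a b (sg a b z) = z"
  unfolding sg_def by (cases z; cases a; cases b) auto

lemma sg_inv_l: "sg a b (inv_l z) = inv_l (sg a b z)"
  unfolding sg_def inv_l_def by (cases z; cases a; cases b) auto

lemma sg_ab: "sg a b a = b"
  unfolding sg_def by (cases a; cases b) auto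

lemma map_sg_TT: "t \<in> TT \<Longrightarrow> map (sg a b) t \<in> TT"
proof -
  assume "t \<in> TT"
  then have r: "reduced t" by (simp add: TT_def)
  have "reduced (map (sg a b) t)" unfolding reduced_alt
  proof (intro allI impI)
    fix k assume k: "Suc k < length (map (sg a b) t)"
    then have "t ! Suc k \<noteq> inv_l (t ! k)" using r unfolding reduced_alt by simp
    then have "sg a b (t ! Suc k) \<noteq> sg a b (inv_l (t ! k))" using sg_invol by metis
    then show "map (sg a b) t ! Suc k \<noteq> inv_l (map (sg a b) t ! k)" using k by (simp add: sg_inv_l)
  qed
  then show ?thesis by (simp add: TT_def)
qed

lemma map_sg_invol: "map (sg a b) (map (sg a b) t) = t"
  by (induct t) (auto simp: sg_invol)

lemma map_sg_adj: "adj s t \<Longrightarrow> adj (map (sg a b) s) (map (sg a b) t)"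
  unfolding adj_def by auto

lemma sg_aut: "tree_aut (map (sg a b))" "\<forall>t\<in>TT. inv_into TT (map (sg a b)) t = map (sg a b) t"
  using aut_lemma[of "map (sg a b)" "map (sg a b)"] map_sg_TT map_sg_invol map_sg_adj
  by blast+


lemma single_TT[simp]: "[x] \<in> TT" by (simp add: TT_def)
lemma nil_TT[simp]: "[] \<in> TT" by (simp add: TT_def)

lemma Lam_lm:
  assumes eq: "equivariant_on D \<Lambda>" and E: "ind {[]} \<in> D" and t: "t \<in> TT"
  shows "\<Lambda> (ind {[l]}) t = \<Lambda> (ind {[]}) (lm (inv_l l) t)"
proof -
  have u: "uact (lm l) (ind {[]}) = ind {[l]}"
  proof
    fix s
    show "uact (lm l) (ind {[]}) s = ind {[l]} s"
    proof (cases "s \<in> TT")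
      case True
      have "lm (inv_l l) s = [] \<longleftrightarrow> s = [l]"
      proof
        assume "lm (inv_l l) s = []"
        then have "lm l (lm (inv_l l) s) = [l]" by simp
        then show "s = [l]" using lm_inv[OF True, of "inv_l l"] by simp
      next
        assume "s = [l]" then show "lm (inv_l l) s = []" by simp
      qed
      then show ?thesis using True lm_aut(2)[of l] unfolding uact_def ind_def by auto
    next
      case False
      then show ?thesis unfolding uact_def ind_def by auto
    qed
  qed
  have "uact (lm l) (\<Lambda> (ind {[]})) t = \<Lambda> (uact (lm l) (ind {[]})) t"
    using eq lm_aut(1) E t unfolding equivariant_on_def by blast
  then show ?thesis using u t lm_aut(2)[of l] unfolding uact_def by simp
qed

lemma Lam_sg:
  assumes eq: "equivariant_on D \<Lambda>" and E: "ind {[]} \<in> D"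
  shows "\<Lambda> (ind {[]}) [a] = \<Lambda> (ind {[]}) [b]"
proof -
  let ?g = "map (sg a b)"
  have u: "uact ?g (ind {[]}) = ind {[]}"
    using sg_aut(2)[of a b] unfolding uact_def ind_def by (auto simp: fun_eq_iff)
  have "uact ?g (\<Lambda> (ind {[]})) [b] = \<Lambda> (uact ?g (ind {[]})) [b]"
    using eq sg_aut(1) E unfolding equivariant_on_def by simp
  moreover have "sg a b b = a" using sg_invol[of a b a] sg_ab[of a b] by simp
  ultimately show ?thesis using u sg_aut(2)[of a b] unfolding uact_def by simp
qed

definition xs :: "nat \<Rightarrow> word \<Rightarrow> complex" where
  "xs n = ind ((\<lambda>i. [(i,True)]) ` {..<n})"

lemma xs_fin: "finite ((\<lambda>i. [(i,True)]) ` {..<n})" "(\<lambda>i. [(i,True)]) ` {..<n} \<subseteq> TT"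
  by auto

lemma card_xs: "card ((\<lambda>i. [(i,True)]) ` {..<n}) = n"
  by (subst card_image) (auto simp: inj_on_def)

lemma lin_sum:
  assumes lin: "lin_on D \<Lambda>" and incl: "\<forall>A. finite A \<and> A \<subseteq> TT \<longrightarrow> ind A \<in> D" and t: "t \<in> TT"
  shows "\<Lambda> (xs n) t = (\<Sum>i<n. \<Lambda> (ind {[(i,True)]}) t)"
proof (induct n)
  case 0
  have z: "(\<lambda>s. 0 * ind {} s + 0 * ind {} s) = xs 0" by (auto simp: xs_def ind_def)
  have "ind {} \<in> D" using incl by simp
  then have "\<Lambda> (\<lambda>s. 0 * ind {} s + 0 * ind {} s) t = 0 * \<Lambda> (ind {}) t + 0 * \<Lambda> (ind {}) t"
    using lin t unfolding lin_on_def by blast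
  then show ?case using z by simp
next
  case (Suc n)
  have z: "(\<lambda>s. 1 * xs n s + 1 * ind {[(n,True)]} s) = xs (Suc n)"
    by (auto simp: xs_def ind_def fun_eq_iff lessThan_Suc)
  have "xs n \<in> D" "ind {[(n,True)]} \<in> D" using incl xs_fin unfolding xs_def by auto
  then have "\<Lambda> (\<lambda>s. 1 * xs n s + 1 * ind {[(n,True)]} s) t = 1 * \<Lambda> (xs n) t + 1 * \<Lambda> (ind {[(n,True)]}) t"
    using lin t unfolding lin_on_def by blast
  then show ?case using z Suc by simp
qed

lemma arch_le0:
  fixes a B :: real
  assumes "\<And>N::nat. real N * a \<le> B"
  shows "a \<le> 0"
proof (rule ccontr)
  assume "\<not> a \<le> 0"
  then have a: "a > 0" by simp
  obtain N :: nat where "B / a < real N" using reals_Archimedean2 by blast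
  then have "B < real N * a" using a by (simp add: field_simps)
  then show False using assms[of N] by simp
qed

lemma final_contra:
  fixes C :: real
  assumes "\<And>n::nat. (real n)\<^sup>2 \<le> C\<^sup>2 * real n"
  shows False
proof -
  define n where "n = nat \<lceil>C\<^sup>2\<rceil> + 1"
  have n: "real n > C\<^sup>2" unfolding n_def by linarith
  have "n > 0" unfolding n_def by simp
  then have "real n > 0" by simp
  then have "real n * real n > C\<^sup>2 * real n" using n by (rule mult_strict_right_mono[rotated])
  then have "(real n)\<^sup>2 > C\<^sup>2 * real n" by (simp add: power2_eq_square)
  then show False using assms[of n] by simp
qed

lemma sq_bound:
  fixes a C :: real
  assumes "a \<ge> 0" "a \<le> C * b" "b \<ge> 0"
  shows "a\<^sup>2 \<le> C\<^sup>2 * b\<^sup>2"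
proof -
  have "a\<^sup>2 \<le> (C*b)\<^sup>2" using assms by (intro power_mono) auto
  then show ?thesis by (simp add: power_mult_distrib)
qed


lemma part1:
  "\<nexists>\<Lambda>. lin_on ell2 \<Lambda> \<and> equivariant_on ell2 \<Lambda> \<and>
            (\<exists>C::real. \<forall>x\<in>ell2. restrT (\<lambda>t. Rop x t - \<Lambda> x t) \<in> ell2 \<and>
                 norm2 (restrT (\<lambda>t. Rop x t - \<Lambda> x t)) \<le> C * norm2 x)"
proof
  assume "\<exists>\<Lambda>. lin_on ell2 \<Lambda> \<and> equivariant_on ell2 \<Lambda> \<and>
            (\<exists>C::real. \<forall>x\<in>ell2. restrT (\<lambda>t. Rop x t - \<Lambda> x t) \<in> ell2 \<and>
                 norm2 (restrT (\<lambda>t. Rop x t - \<Lambda> x t)) \<le> C * norm2 x)"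
  then obtain \<Lambda> C where lin: "lin_on ell2 \<Lambda>" and eq: "equivariant_on ell2 \<Lambda>" and
    bd: "\<And>x. x \<in> ell2 \<Longrightarrow> restrT (\<lambda>t. Rop x t - \<Lambda> x t) \<in> ell2 \<and>
                 norm2 (restrT (\<lambda>t. Rop x t - \<Lambda> x t)) \<le> C * norm2 x" by blast
  have incl: "\<forall>A. finite A \<and> A \<subseteq> TT \<longrightarrow> ind A \<in> ell2" using ind_in(2) by auto
  define E where "E = ind {[]}"
  have E: "E \<in> ell2" using incl E_def by simp
  define \<kappa> where "\<kappa> = \<Lambda> E [(0,True)]"
  have hk: "\<Lambda> E [a] = \<kappa>" for a using Lam_sg[OF eq E[unfolded E_def], of a "(0,True)"] unfolding \<kappa>_def E_def by simp
  define c where "c = [(0::nat,True)]"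
  define D1 where "D1 = restrT (\<lambda>t. Rop (ind {c}) t - \<Lambda> (ind {c}) t)"
  have ic: "ind {c} \<in> ell2" using incl c_def by simp
  have nc: "norm2 (ind {c}) = 1" using norm2_ind[of "{c}"] c_def by simp
  have D1: "D1 \<in> ell2" "norm2 D1 \<le> C" using bd[OF ic] nc unfolding D1_def by auto
  define ch where "ch = (\<lambda>j::nat. [(0::nat,True),(j,True)])"
  have chT: "ch j \<in> TT" for j unfolding ch_def TT_def by (simp add: reduced_Cons2 inv_l_def)
  have D1ch: "D1 (ch j) = 1 - \<kappa>" for j
  proof -
    have "Rop (ind {c}) (ch j) = 1" using chT[of j] unfolding Rop_def ind_def ch_def c_def by simp
    moreover have "\<Lambda> (ind {c}) (ch j) = \<kappa>"
      using Lam_lm[OF eq _ chT[of j], of "(0,True)"] E E_def hk unfolding c_def ch_def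
      by (simp add: inv_l_def)
    ultimately show ?thesis using chT[of j] unfolding D1_def restrT_def by simp
  qed
  have "real N * (norm (1 - \<kappa>))\<^sup>2 \<le> C\<^sup>2" for N
  proof -
    have inj: "inj ch" unfolding ch_def inj_def by simp
    have "(\<Sum>t\<in>ch ` {..<N}. (norm (D1 t))\<^sup>2) \<le> (norm2 D1)\<^sup>2"
      by (rule sum_le_norm2) (use D1 chT in auto)
    also have "\<dots> \<le> C\<^sup>2" using D1 norm2_nonneg[of D1] by (intro power_mono) auto
    finally have "(\<Sum>t\<in>ch ` {..<N}. (norm (D1 t))\<^sup>2) \<le> C\<^sup>2" .
    moreover have "(\<Sum>t\<in>ch ` {..<N}. (norm (D1 t))\<^sup>2) = real N * (norm (1 - \<kappa>))\<^sup>2"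
      using inj by (simp add: sum.reindex inj_on_def inj_def D1ch)
    ultimately show ?thesis by simp
  qed
  then have "(norm (1 - \<kappa>))\<^sup>2 \<le> 0" by (rule arch_le0)
  then have k1: "\<kappa> = 1" by simp
  have li: "\<Lambda> (ind {[(i,True)]}) [] = 1" for i
  proof -
    have "lm (inv_l (i,True)) [] = [(i,False)]" by (simp add: inv_l_def)
    then have "\<Lambda> (ind {[(i,True)]}) [] = \<Lambda> E [(i,False)]"
      using Lam_lm[OF eq E[unfolded E_def] nil_TT, of "(i,True)"] unfolding E_def by simp
    then show ?thesis using hk k1 by simp
  qed
  have "(real n)\<^sup>2 \<le> C\<^sup>2 * real n" for n
  proof -
    have xn: "xs n \<in> ell2" unfolding xs_def by (rule ind_in(2)[OF xs_fin])
    have nx: "norm2 (xs n) = sqrt (real n)" using norm2_ind[OF xs_fin] card_xs xs_def by simp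
    define Dn where "Dn = restrT (\<lambda>t. Rop (xs n) t - \<Lambda> (xs n) t)"
    have "Dn \<in> ell2 \<and> norm2 Dn \<le> C * norm2 (xs n)" unfolding Dn_def by (rule bd[OF xn])
    then have Dn: "Dn \<in> ell2" "norm2 Dn \<le> C * sqrt (real n)" unfolding nx by auto
    have "\<Lambda> (xs n) [] = of_nat n" using lin_sum[OF lin incl nil_TT, of n] li by simp
    then have "Dn [] = - of_nat n" unfolding Dn_def restrT_def Rop_def by simp
    then have "(real n)\<^sup>2 = (\<Sum>t\<in>{[]}. (norm (Dn t))\<^sup>2)" by simp
    also have "\<dots> \<le> (norm2 Dn)\<^sup>2" by (rule sum_le_norm2) (use Dn in auto)
    also have "\<dots> \<le> C\<^sup>2 * (sqrt (real n))\<^sup>2" by (rule sq_bound) (use Dn norm2_nonneg in auto)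
    finally show ?thesis by simp
  qed
  then show False by (rule final_contra)
qed

lemma part2:
  "\<nexists>\<Lambda>. lin_on ell1 \<Lambda> \<and> equivariant_on ell1 \<Lambda> \<and>
            (\<exists>C::real. \<forall>x\<in>ell1. restrT (\<lambda>t. Lop x t - \<Lambda> x t) \<in> ell2 \<and>
                 norm2 (restrT (\<lambda>t. Lop x t - \<Lambda> x t)) \<le> C * norm2 x)"
proof
  assume "\<exists>\<Lambda>. lin_on ell1 \<Lambda> \<and> equivariant_on ell1 \<Lambda> \<and>
            (\<exists>C::real. \<forall>x\<in>ell1. restrT (\<lambda>t. Lop x t - \<Lambda> x t) \<in> ell2 \<and>
                 norm2 (restrT (\<lambda>t. Lop x t - \<Lambda> x t)) \<le> C * norm2 x)"
  then obtain \<Lambda> C where lin: "lin_on ell1 \<Lambda>" and eq: "equivariant_on ell1 \<Lambda>" and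
    bd: "\<And>x. x \<in> ell1 \<Longrightarrow> restrT (\<lambda>t. Lop x t - \<Lambda> x t) \<in> ell2 \<and>
                 norm2 (restrT (\<lambda>t. Lop x t - \<Lambda> x t)) \<le> C * norm2 x" by blast
  have incl: "\<forall>A. finite A \<and> A \<subseteq> TT \<longrightarrow> ind A \<in> ell1" using ind_in(1) by auto
  define E where "E = ind {[]}"
  have E: "E \<in> ell1" using incl E_def by simp
  define \<kappa> where "\<kappa> = \<Lambda> E [(0,True)]"
  have hk: "\<Lambda> E [a] = \<kappa>" for a using Lam_sg[OF eq E[unfolded E_def], of a "(0,True)"] unfolding \<kappa>_def E_def by simp
  have LE: "Lop E s = 0" for s
    unfolding Lop_def E_def ind_def by (auto intro!: infsum_0)
  define D1 where "D1 = restrT (\<lambda>t. Lop E t - \<Lambda> E t)"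
  have nc: "norm2 E = 1" using norm2_ind[of "{[]}"] E_def by simp
  have D1: "D1 \<in> ell2" "norm2 D1 \<le> C" using bd[OF E] nc unfolding D1_def by auto
  define ch where "ch = (\<lambda>j::nat. [(j,True)])"
  have chT: "ch j \<in> TT" for j unfolding ch_def by simp
  have D1ch: "D1 (ch j) = - \<kappa>" for j
    using chT[of j] hk LE unfolding D1_def restrT_def ch_def by simp
  have "real N * (norm \<kappa>)\<^sup>2 \<le> C\<^sup>2" for N
  proof -
    have inj: "inj ch" unfolding ch_def inj_def by simp
    have "(\<Sum>t\<in>ch ` {..<N}. (norm (D1 t))\<^sup>2) \<le> (norm2 D1)\<^sup>2"
      by (rule sum_le_norm2) (use D1 chT in auto)
    also have "\<dots> \<le> C\<^sup>2" using D1 norm2_nonneg[of D1] by (intro power_mono) auto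
    finally have "(\<Sum>t\<in>ch ` {..<N}. (norm (D1 t))\<^sup>2) \<le> C\<^sup>2" .
    moreover have "(\<Sum>t\<in>ch ` {..<N}. (norm (D1 t))\<^sup>2) = real N * (norm \<kappa>)\<^sup>2"
      using inj by (simp add: sum.reindex inj_on_def inj_def D1ch)
    ultimately show ?thesis by simp
  qed
  then have "(norm \<kappa>)\<^sup>2 \<le> 0" by (rule arch_le0)
  then have k0: "\<kappa> = 0" by simp
  have li: "\<Lambda> (ind {[(i,True)]}) [] = 0" for i
  proof -
    have "lm (inv_l (i,True)) [] = [(i,False)]" by (simp add: inv_l_def)
    then have "\<Lambda> (ind {[(i,True)]}) [] = \<Lambda> E [(i,False)]"
      using Lam_lm[OF eq E[unfolded E_def] nil_TT, of "(i,True)"] unfolding E_def by simp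
    then show ?thesis using hk k0 by simp
  qed
  have "(real n)\<^sup>2 \<le> C\<^sup>2 * real n" for n
  proof -
    let ?A = "(\<lambda>i. [(i,True)]) ` {..<n}"
    have xn: "xs n \<in> ell1" unfolding xs_def by (rule ind_in(1)[OF xs_fin])
    have nx: "norm2 (xs n) = sqrt (real n)" using norm2_ind[OF xs_fin] card_xs xs_def by simp
    define Dn where "Dn = restrT (\<lambda>t. Lop (xs n) t - \<Lambda> (xs n) t)"
    have "Dn \<in> ell2 \<and> norm2 Dn \<le> C * norm2 (xs n)" unfolding Dn_def by (rule bd[OF xn])
    then have Dn: "Dn \<in> ell2" "norm2 Dn \<le> C * sqrt (real n)" unfolding nx by auto
    have "\<Lambda> (xs n) [] = 0" using lin_sum[OF lin incl nil_TT, of n] li by simp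
    moreover have "Lop (xs n) [] = of_nat n"
    proof -
      have "(\<Sum>\<^sub>\<infinity>t\<in>{t\<in>TT. t \<noteq> [] \<and> butlast t = []}. xs n t) = (\<Sum>\<^sub>\<infinity>t\<in>?A. xs n t)"
        by (rule infsum_cong_neutral) (auto simp: xs_def ind_def)
      also have "\<dots> = (\<Sum>t\<in>?A. 1)" by (simp add: xs_def ind_def)
      also have "\<dots> = of_nat n" using card_xs[of n] by simp
      finally show ?thesis unfolding Lop_def by simp
    qed
    ultimately have "Dn [] = of_nat n" unfolding Dn_def restrT_def by simp
    then have "(real n)\<^sup>2 = (\<Sum>t\<in>{[]}. (norm (Dn t))\<^sup>2)" by simp
    also have "\<dots> \<le> (norm2 Dn)\<^sup>2" by (rule sum_le_norm2) (use Dn in auto)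
    also have "\<dots> \<le> C\<^sup>2 * (sqrt (real n))\<^sup>2" by (rule sq_bound) (use Dn norm2_nonneg in auto)
    finally show ?thesis by simp
  qed
  then show False by (rule final_contra)
qed

theorem mainTheorem5:
  shows "(\<nexists>\<Lambda>. lin_on ell2 \<Lambda> \<and> equivariant_on ell2 \<Lambda> \<and>
            (\<exists>C::real. \<forall>x\<in>ell2. restrT (\<lambda>t. Rop x t - \<Lambda> x t) \<in> ell2 \<and>
                 norm2 (restrT (\<lambda>t. Rop x t - \<Lambda> x t)) \<le> C * norm2 x))
       \<and> (\<nexists>\<Lambda>. lin_on ell1 \<Lambda> \<and> equivariant_on ell1 \<Lambda> \<and>
            (\<exists>C::real. \<forall>x\<in>ell1. restrT (\<lambda>t. Lop x t - \<Lambda> x t) \<in> ell2 \<and>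
                 norm2 (restrT (\<lambda>t. Lop x t - \<Lambda> x t)) \<le> C * norm2 x))"
  using part1 part2 by blast

end
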